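(* For every $n$, $\mathrm{ex}(n,(M,C_5),K_3)=\mathcal N(M,T_2(n))+\mathcal N(C_5,T_2(n))$ and $\mathrm{ex}(n,(M',C_5),K_3)=\mathcal N(M',T_2(n))+\mathcal N(C_5,T_2(n))$.
   Context: $M$ is the five-vertex graph consisting of two independent edges and an isolated vertex; $M'$ is the five-vertex graph consisting of a path on three vertices and a disjoint edge; $C_5$ is the 5-cycle. $T_2(n)$ is the complete bipartite graph on $n$ vertices with parts of sizes $\lfloor n/2\rfloor$, $\lceil n/2\rceil$. $\mathcal N(H,G)$ is the number of subgraphs of $G$ isomorphic to $H$; $\mathrm{ex}(n,(H_1,H_2),K_3)$ is the maximum of $\mathcal N(H_1,G)+\mathcal N(H_2,G)$ over triangle-free $n$-vertex graphs $G$. *)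

theory Defs
  imports Main
begin

type_synonym 'a graph = "'a set \<times> 'a set set"

definition is_graph :: "'a graph \<Rightarrow> bool" where
  "is_graph G \<longleftrightarrow> finite (fst G) \<and> (\<forall>e\<in>snd G. card e = 2 \<and> e \<subseteq> fst G)"

definition graph_iso :: "'a graph \<Rightarrow> 'b graph \<Rightarrow> bool" where
  "graph_iso H G \<longleftrightarrow> (\<exists>f. bij_betw f (fst H) (fst G) \<and> (\<lambda>e. f ` e) ` snd H = snd G)"

definition subgraphs :: "'a graph \<Rightarrow> 'a graph set" where
  "subgraphs G = {(V', E'). V' \<subseteq> fst G \<and> E' \<subseteq> snd G \<and> (\<forall>e\<in>E'. e \<subseteq> V')}"

definition num_copies :: "'b graph \<Rightarrow> 'a graph \<Rightarrow> nat" where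
  "num_copies H G = card {S \<in> subgraphs G. graph_iso H S}"

definition triangle_free :: "'a graph \<Rightarrow> bool" where
  "triangle_free G \<longleftrightarrow> \<not> (\<exists>a b c. {a,b} \<in> snd G \<and> {b,c} \<in> snd G \<and> {a,c} \<in> snd G
      \<and> a \<noteq> b \<and> b \<noteq> c \<and> a \<noteq> c)"

definition ex2_K3 :: "nat \<Rightarrow> nat graph \<Rightarrow> nat graph \<Rightarrow> nat" where
  "ex2_K3 n H1 H2 = Max {num_copies H1 G + num_copies H2 G | G.
      is_graph G \<and> fst G = {..<n} \<and> triangle_free G}"

definition T2 :: "nat \<Rightarrow> nat graph" where
  "T2 n = ({..<n}, {{a, b} | a b. a < n div 2 \<and> n div 2 \<le> b \<and> b < n})"

definition graph_M :: "nat graph" where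
  "graph_M = ({0..4}, {{0,1},{2,3}})"

definition graph_M' :: "nat graph" where
  "graph_M' = ({0..4}, {{0,1},{1,2},{3,4}})"

definition graph_C5 :: "nat graph" where
  "graph_C5 = ({0..4}, {{0,1},{1,2},{2,3},{3,4},{4,0}})"

end

theory Submission
  imports Defs Complex_Main
begin

lemma card_fibers_eq:
  assumes "finite A" and "\<And>x. x \<in> A \<Longrightarrow> card {y\<in>A. f y = f x} = k"
  shows "card A = k * card (f ` A)"
proof -
  have A: "A = (\<Union>b\<in>f ` A. {y\<in>A. f y = b})" by auto
  have "card A = (\<Sum>b\<in>f ` A. card {y\<in>A. f y = b})"
    by (subst A, rule card_UN_disjoint) (use assms(1) in auto)
  also have "\<dots> = (\<Sum>b\<in>f ` A. k)"
    by (rule sum.cong) (auto simp: assms(2))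
  finally show ?thesis by simp
qed
lemma card_fibers_ge:
  assumes "finite A" and "\<And>x. x \<in> A \<Longrightarrow> k \<le> card {y\<in>A. f y = f x}"
  shows "k * card (f ` A) \<le> card A"
proof -
  have A: "A = (\<Union>b\<in>f ` A. {y\<in>A. f y = b})" by auto
  have "card A = (\<Sum>b\<in>f ` A. card {y\<in>A. f y = b})"
    by (subst A, rule card_UN_disjoint) (use assms(1) in auto)
  moreover have "(\<Sum>b\<in>f ` A. k) \<le> (\<Sum>b\<in>f ` A. card {y\<in>A. f y = b})"
    by (rule sum_mono) (auto simp: assms(2))
  ultimately show ?thesis by (simp add: mult.commute)
qed
lemma cauchy_sum:
  fixes f :: "'b \<Rightarrow> real"
  assumes "finite V"
  shows "(\<Sum>x\<in>V. f x)^2 \<le> real (card V) * (\<Sum>x\<in>V. (f x)^2)"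
proof -
  have "0 \<le> (\<Sum>x\<in>V. \<Sum>y\<in>V. (f x - f y)^2)" by (intro sum_nonneg) auto
  also have "\<dots> = (\<Sum>x\<in>V. \<Sum>y\<in>V. (f x)^2 + (f y)^2 - 2 * f x * f y)"
    by (simp add: power2_diff)
  also have "\<dots> = 2 * real (card V) * (\<Sum>x\<in>V. (f x)^2) - 2 * (\<Sum>x\<in>V. f x)^2"
    by (simp add: sum.distrib sum_subtractf sum_distrib_left sum_distrib_right power2_eq_square
        algebra_simps)
  finally show ?thesis by simp
qed

definition vf :: "'a \<times> 'a \<times> 'a \<times> 'a \<times> 'a \<Rightarrow> nat \<Rightarrow> 'a" where
  "vf t = (case t of (a,b,c,d,w) \<Rightarrow> nth [a,b,c,d,w])"

definition tl5 :: "'a \<times> 'a \<times> 'a \<times> 'a \<times> 'a \<Rightarrow> 'a list" where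
  "tl5 t = (case t of (a,b,c,d,w) \<Rightarrow> [a,b,c,d,w])"

lemma five: "{0..4::nat} = {0,1,2,3,4}" by auto

lemma copies5:
  assumes EH: "\<forall>h\<in>EH. h \<subseteq> {0..4}"
  shows "{S \<in> subgraphs G. graph_iso ({0..4::nat}, EH) S} =
    (\<lambda>t. (vf t ` {0..4}, image (vf t) ` EH)) `
      {t. distinct (tl5 t) \<and> set (tl5 t) \<subseteq> fst G \<and> (\<forall>h\<in>EH. vf t ` h \<in> snd G)}"
proof (intro equalityI subsetI)
  fix S assume "S \<in> {S \<in> subgraphs G. graph_iso ({0..4::nat}, EH) S}"
  then obtain v where S: "S \<in> subgraphs G" and inj: "inj_on v {0..4}" and
    V: "fst S = v ` {0..4}" and E: "snd S = image v ` EH"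
    unfolding graph_iso_def bij_betw_def by auto
  define t where "t = (v 0, v 1, v 2, v 3, v 4)"
  have vt: "vf t i = v i" if "i \<in> {0..4}" for i
    using that unfolding five by (auto simp: t_def vf_def)
  have im: "vf t ` h = v ` h" if "h \<subseteq> {0..4}" for h
    by (rule image_cong[OF refl]) (use vt that in auto)
  have "distinct (tl5 t)" using inj unfolding t_def tl5_def five inj_on_def by auto
  moreover have "set (tl5 t) \<subseteq> fst G" using S V unfolding t_def tl5_def five subgraphs_def
    by (cases S) auto
  moreover have "\<forall>h\<in>EH. vf t ` h \<in> snd G" using S E EH im unfolding subgraphs_def
    by (cases S) auto
  moreover have "S = (vf t ` {0..4}, image (vf t) ` EH)"
  proof -
    have "vf t ` {0..4} = v ` {0..4}" by (rule im) auto
    moreover have "image (vf t) ` EH = image v ` EH"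
      by (rule image_cong[OF refl]) (use im EH in auto)
    ultimately show ?thesis using V E by (cases S) auto
  qed
  ultimately show "S \<in> (\<lambda>t. (vf t ` {0..4}, image (vf t) ` EH)) `
      {t. distinct (tl5 t) \<and> set (tl5 t) \<subseteq> fst G \<and> (\<forall>h\<in>EH. vf t ` h \<in> snd G)}" by blast
next
  fix S assume "S \<in> (\<lambda>t. (vf t ` {0..4}, image (vf t) ` EH)) `
      {t. distinct (tl5 t) \<and> set (tl5 t) \<subseteq> fst G \<and> (\<forall>h\<in>EH. vf t ` h \<in> snd G)}"
  then obtain t where S: "S = (vf t ` {0..4}, image (vf t) ` EH)" and d: "distinct (tl5 t)"
    and st: "set (tl5 t) \<subseteq> fst G" and eh: "\<forall>h\<in>EH. vf t ` h \<in> snd G" by blast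
  obtain a b c dd w where t: "t = (a,b,c,dd,w)" by (cases t) auto
  have "inj_on (vf t) {0..4}" using d unfolding t vf_def tl5_def five inj_on_def by auto
  hence "graph_iso ({0..4::nat}, EH) S" unfolding graph_iso_def bij_betw_def S by auto
  moreover have "S \<in> subgraphs G"
  proof -
    have 1: "vf t ` {0..4} \<subseteq> fst G" using st unfolding t vf_def tl5_def five by auto
    have 2: "\<forall>h\<in>EH. vf t ` h \<subseteq> vf t ` {0..4}" using EH by blast
    show ?thesis unfolding subgraphs_def S using 1 2 eh by auto
  qed
  ultimately show "S \<in> {S \<in> subgraphs G. graph_iso ({0..4::nat}, EH) S}" by blast
qed

definition phiM :: "'a \<times> 'a \<times> 'a \<times> 'a \<times> 'a \<Rightarrow> 'a graph" where
  "phiM = (\<lambda>(a,b,c,d,w). ({a,b,c,d,w}, {{a,b},{c,d}}))"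
definition phiP :: "'a \<times> 'a \<times> 'a \<times> 'a \<times> 'a \<Rightarrow> 'a graph" where
  "phiP = (\<lambda>(a,b,c,d,w). ({a,b,c,d,w}, {{a,b},{b,c},{d,w}}))"
definition phiC :: "'a \<times> 'a \<times> 'a \<times> 'a \<times> 'a \<Rightarrow> 'a graph" where
  "phiC = (\<lambda>(a,b,c,d,w). ({a,b,c,d,w}, {{a,b},{b,c},{c,d},{d,w},{w,a}}))"

definition TupM :: "'a graph \<Rightarrow> ('a \<times> 'a \<times> 'a \<times> 'a \<times> 'a) set" where
  "TupM G = {(a,b,c,d,w). distinct [a,b,c,d,w] \<and> {a,b,c,d,w} \<subseteq> fst G \<and> {a,b} \<in> snd G \<and> {c,d} \<in> snd G}"
definition TupP :: "'a graph \<Rightarrow> ('a \<times> 'a \<times> 'a \<times> 'a \<times> 'a) set" where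
  "TupP G = {(a,b,c,d,w). distinct [a,b,c,d,w] \<and> {a,b,c,d,w} \<subseteq> fst G \<and> {a,b} \<in> snd G \<and> {b,c} \<in> snd G
     \<and> {d,w} \<in> snd G}"
definition TupC :: "'a graph \<Rightarrow> ('a \<times> 'a \<times> 'a \<times> 'a \<times> 'a) set" where
  "TupC G = {(a,b,c,d,w). distinct [a,b,c,d,w] \<and> {a,b,c,d,w} \<subseteq> fst G \<and> {a,b} \<in> snd G \<and> {b,c} \<in> snd G
     \<and> {c,d} \<in> snd G \<and> {d,w} \<in> snd G \<and> {w,a} \<in> snd G}"

lemma vf_img: "vf (a,b,c,d,w) ` {0..4} = {a,b,c,d,w}"
  unfolding five vf_def by auto

lemma tup_set: "{t. distinct (tl5 t) \<and> set (tl5 t) \<subseteq> fst G \<and> P (vf t)} =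
   {(a,b,c,d,w). distinct [a,b,c,d,w] \<and> {a,b,c,d,w} \<subseteq> fst G \<and> P (vf (a,b,c,d,w))}"
  by (auto simp: tl5_def)

lemma copies_M: "{S \<in> subgraphs G. graph_iso graph_M S} = phiM ` TupM G"
proof -
  have "{S \<in> subgraphs G. graph_iso graph_M S} =
    (\<lambda>t. (vf t ` {0..4}, image (vf t) ` {{0,1},{2,3}})) `
      {t. distinct (tl5 t) \<and> set (tl5 t) \<subseteq> fst G \<and> (\<forall>h\<in>{{0,1},{2,3}}. vf t ` h \<in> snd G)}"
    unfolding graph_M_def by (rule copies5) auto
  also have "\<dots> = phiM ` TupM G"
  proof (rule image_cong)
    show "{t. distinct (tl5 t) \<and> set (tl5 t) \<subseteq> fst G \<and> (\<forall>h\<in>{{0,1},{2,3}}. vf t ` h \<in> snd G)} = TupM G"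
      by (auto simp: TupM_def tl5_def vf_def)
    fix t assume "t \<in> TupM G"
    obtain a b c d w where t: "t = (a,b,c,d,w)" by (cases t) auto
    show "(vf t ` {0..4}, image (vf t) ` {{0,1},{2,3}}) = phiM t"
      unfolding t vf_img by (simp add: phiM_def vf_def)
  qed
  finally show ?thesis .
qed

lemma copies_P: "{S \<in> subgraphs G. graph_iso graph_M' S} = phiP ` TupP G"
proof -
  have "{S \<in> subgraphs G. graph_iso graph_M' S} =
    (\<lambda>t. (vf t ` {0..4}, image (vf t) ` {{0,1},{1,2},{3,4}})) `
      {t. distinct (tl5 t) \<and> set (tl5 t) \<subseteq> fst G \<and> (\<forall>h\<in>{{0,1},{1,2},{3,4}}. vf t ` h \<in> snd G)}"
    unfolding graph_M'_def by (rule copies5) auto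
  also have "\<dots> = phiP ` TupP G"
  proof (rule image_cong)
    show "{t. distinct (tl5 t) \<and> set (tl5 t) \<subseteq> fst G \<and> (\<forall>h\<in>{{0,1},{1,2},{3,4}}. vf t ` h \<in> snd G)} = TupP G"
      by (auto simp: TupP_def tl5_def vf_def)
    fix t assume "t \<in> TupP G"
    obtain a b c d w where t: "t = (a,b,c,d,w)" by (cases t) auto
    show "(vf t ` {0..4}, image (vf t) ` {{0,1},{1,2},{3,4}}) = phiP t"
      unfolding t vf_img by (simp add: phiP_def vf_def)
  qed
  finally show ?thesis .
qed

lemma copies_C: "{S \<in> subgraphs G. graph_iso graph_C5 S} = phiC ` TupC G"
proof -
  have "{S \<in> subgraphs G. graph_iso graph_C5 S} =
    (\<lambda>t. (vf t ` {0..4}, image (vf t) ` {{0,1},{1,2},{2,3},{3,4},{4,0}})) `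
      {t. distinct (tl5 t) \<and> set (tl5 t) \<subseteq> fst G \<and> (\<forall>h\<in>{{0,1},{1,2},{2,3},{3,4},{4,0}}. vf t ` h \<in> snd G)}"
    unfolding graph_C5_def by (rule copies5) auto
  also have "\<dots> = phiC ` TupC G"
  proof (rule image_cong)
    show "{t. distinct (tl5 t) \<and> set (tl5 t) \<subseteq> fst G \<and> (\<forall>h\<in>{{0,1},{1,2},{2,3},{3,4},{4,0}}. vf t ` h \<in> snd G)} = TupC G"
      by (auto simp: TupC_def tl5_def vf_def)
    fix t assume "t \<in> TupC G"
    obtain a b c d w where t: "t = (a,b,c,d,w)" by (cases t) auto
    show "(vf t ` {0..4}, image (vf t) ` {{0,1},{1,2},{2,3},{3,4},{4,0}}) = phiC t"
      unfolding t vf_img by (simp add: phiC_def vf_def)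
  qed
  finally show ?thesis .
qed

lemma finite_Tup:
  assumes "finite (fst G)"
  shows "finite {(a,b,c,d,w). distinct [a,b,c,d,w] \<and> {a,b,c,d,w} \<subseteq> fst G \<and> P a b c d w}"
proof -
  let ?V = "fst G"
  have "{(a,b,c,d,w). distinct [a,b,c,d,w] \<and> {a,b,c,d,w} \<subseteq> fst G \<and> P a b c d w}
     \<subseteq> ?V \<times> ?V \<times> ?V \<times> ?V \<times> ?V" by auto
  thus ?thesis by (rule finite_subset) (use assms in auto)
qed

lemma fiberM:
  assumes t: "t = (a,b,c,d,w)" "t \<in> TupM G"
  shows "{y\<in>TupM G. phiM y = phiM t} = {(a,b,c,d,w),(b,a,c,d,w),(a,b,d,c,w),(b,a,d,c,w),
     (c,d,a,b,w),(d,c,a,b,w),(c,d,b,a,w),(d,c,b,a,w)}"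
proof (intro equalityI subsetI)
  fix y assume y: "y \<in> {y\<in>TupM G. phiM y = phiM t}"
  obtain a' b' c' d' w' where yy: "y = (a',b',c',d',w')" by (cases y) auto
  from y t have dist: "distinct [a,b,c,d,w]" "distinct [a',b',c',d',w']"
    and V: "{a',b',c',d',w'} = {a,b,c,d,w}" and E: "{{a',b'},{c',d'}} = {{a,b},{c,d}}"
    by (auto simp: yy TupM_def phiM_def)
  have "({a',b'} = {a,b} \<and> {c',d'} = {c,d}) \<or> ({a',b'} = {c,d} \<and> {c',d'} = {a,b})"
    using E by (simp add: doubleton_eq_iff)
  hence 1: "((a' = a \<and> b' = b) \<or> (a' = b \<and> b' = a)) \<and> ((c' = c \<and> d' = d) \<or> (c' = d \<and> d' = c)) \<or>
            ((a' = c \<and> b' = d) \<or> (a' = d \<and> b' = c)) \<and> ((c' = a \<and> d' = b) \<or> (c' = b \<and> d' = a))"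
    by (simp add: doubleton_eq_iff)
  have "w' \<in> {a,b,c,d,w}" using V by blast
  hence "w' = w" using 1 dist by auto
  thus "y \<in> {(a,b,c,d,w),(b,a,c,d,w),(a,b,d,c,w),(b,a,d,c,w),
     (c,d,a,b,w),(d,c,a,b,w),(c,d,b,a,w),(d,c,b,a,w)}" using 1 yy by auto
next
  fix y assume "y \<in> {(a,b,c,d,w),(b,a,c,d,w),(a,b,d,c,w),(b,a,d,c,w),
     (c,d,a,b,w),(d,c,a,b,w),(c,d,b,a,w),(d,c,b,a,w)}"
  with t show "y \<in> {y\<in>TupM G. phiM y = phiM t}"
    by (auto simp: TupM_def phiM_def insert_commute)
qed

lemma card_TupM: "finite (fst G) \<Longrightarrow> card (TupM G) = 8 * card (phiM ` TupM G)"
proof (rule card_fibers_eq)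
  show "finite (fst G) \<Longrightarrow> finite (TupM G)" unfolding TupM_def by (rule finite_Tup)
  fix x assume x: "x \<in> TupM G"
  obtain a b c d w where t: "x = (a,b,c,d,w)" by (cases x) auto
  have "distinct [a,b,c,d,w]" using x t by (auto simp: TupM_def)
  thus "card {y\<in>TupM G. phiM y = phiM x} = 8"
    unfolding fiberM[OF t x] by auto
qed

lemma TupP_s1: "(a,b,c,d,w) \<in> TupP G \<Longrightarrow> (c,b,a,d,w) \<in> TupP G"
  unfolding TupP_def by (simp add: insert_commute) blast
lemma TupP_s2: "(a,b,c,d,w) \<in> TupP G \<Longrightarrow> (a,b,c,w,d) \<in> TupP G"
  unfolding TupP_def by (simp add: insert_commute) blast
lemma phiP_s1: "phiP (c,b,a,d,w) = phiP (a,b,c,d,w)" by (simp add: phiP_def insert_commute)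
lemma phiP_s2: "phiP (a,b,c,w,d) = phiP (a,b,c,d,w)" by (simp add: phiP_def insert_commute)

lemma fiberP:
  assumes t: "t = (a,b,c,d,w)" "t \<in> TupP G"
  shows "{y\<in>TupP G. phiP y = phiP t} = {(a,b,c,d,w),(c,b,a,d,w),(a,b,c,w,d),(c,b,a,w,d)}"
proof (intro equalityI subsetI)
  fix y assume y: "y \<in> {y\<in>TupP G. phiP y = phiP t}"
  obtain a' b' c' d' w' where yy: "y = (a',b',c',d',w')" by (cases y) auto
  from y t have dist: "distinct [a,b,c,d,w]" "distinct [a',b',c',d',w']"
    and E: "{{a',b'},{b',c'},{d',w'}} = {{a,b},{b,c},{d,w}}"
    by (auto simp: yy TupP_def phiP_def)
  have mem: "\<And>x. x \<in> {{a',b'},{b',c'},{d',w'}} \<longleftrightarrow> x \<in> {{a,b},{b,c},{d,w}}" using E by simp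
  have cb: "b' \<in> x" if "x \<in> {{a,b},{b,c},{d,w}}" "x \<noteq> {d',w'}" for x
  proof -
    have "x = {a',b'} \<or> x = {b',c'}" using mem[of x] that by blast
    thus ?thesis by blast
  qed
  have ne: "{a,b} \<noteq> {b,c}" "{a,b} \<noteq> {d,w}" "{b,c} \<noteq> {d,w}" using dist by (auto simp: doubleton_eq_iff)
  have dw: "{d',w'} = {d,w}"
  proof (rule ccontr)
    assume "{d',w'} \<noteq> {d,w}"
    moreover have "{d',w'} \<in> {{a,b},{b,c},{d,w}}" using mem[of "{d',w'}"] by blast
    ultimately have "{d',w'} = {a,b} \<or> {d',w'} = {b,c}" by auto
    thus False
    proof
      assume h: "{d',w'} = {a,b}"
      have "b' \<in> {b,c}" "b' \<in> {d,w}" using cb[of "{b,c}"] cb[of "{d,w}"] h ne by auto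
      thus False using dist by auto
    next
      assume h: "{d',w'} = {b,c}"
      have "b' \<in> {a,b}" "b' \<in> {d,w}" using cb[of "{a,b}"] cb[of "{d,w}"] h ne by auto
      thus False using dist by auto
    qed
  qed
  have "b' \<in> {a,b}" "b' \<in> {b,c}" using cb[of "{a,b}"] cb[of "{b,c}"] dw ne by auto
  hence bb: "b' = b" using dist by auto
  have "{a',b'} \<in> {{a,b},{b,c},{d,w}}" "{b',c'} \<in> {{a,b},{b,c},{d,w}}"
    using mem[of "{a',b'}", THEN iffD1, OF insertI1] mem[of "{b',c'}", THEN iffD1, OF insertI2[OF insertI1]] .
  hence "{a',b} \<in> {{a,b},{b,c},{d,w}}" "{b,c'} \<in> {{a,b},{b,c},{d,w}}" using bb by simp_all
  hence "a' \<in> {a,c}" "c' \<in> {a,c}" using dist by (auto simp: doubleton_eq_iff)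
  moreover have "a' \<noteq> c'" using dist by auto
  moreover have "(d' = d \<and> w' = w) \<or> (d' = w \<and> w' = d)" using dw by (simp add: doubleton_eq_iff)
  ultimately show "y \<in> {(a,b,c,d,w),(c,b,a,d,w),(a,b,c,w,d),(c,b,a,w,d)}"
    using yy bb by auto
next
  fix y assume "y \<in> {(a,b,c,d,w),(c,b,a,d,w),(a,b,c,w,d),(c,b,a,w,d)}"
  moreover have "(a,b,c,d,w) \<in> TupP G" using t by simp
  ultimately show "y \<in> {y\<in>TupP G. phiP y = phiP t}"
    using TupP_s1[of a b c d w G] TupP_s2[of a b c d w G] TupP_s2[of c b a d w G]
      phiP_s1[of c b a d w] phiP_s2[of a b c d w]  phiP_s2[of c b a d w] t
    by (elim insertE emptyE) simp_all
qed

lemma card_TupP: "finite (fst G) \<Longrightarrow> card (TupP G) = 4 * card (phiP ` TupP G)"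
proof (rule card_fibers_eq)
  show "finite (fst G) \<Longrightarrow> finite (TupP G)" unfolding TupP_def by (rule finite_Tup)
  fix x assume x: "x \<in> TupP G"
  obtain a b c d w where t: "x = (a,b,c,d,w)" by (cases x) auto
  have "distinct [a,b,c,d,w]" using x t by (auto simp: TupP_def)
  thus "card {y\<in>TupP G. phiP y = phiP x} = 4"
    unfolding fiberP[OF t x] by auto
qed

lemma TupC_rot: "(a,b,c,d,w) \<in> TupC G \<Longrightarrow> (b,c,d,w,a) \<in> TupC G"
  unfolding TupC_def by (simp add: insert_commute) blast
lemma TupC_ref: "(a,b,c,d,w) \<in> TupC G \<Longrightarrow> (a,w,d,c,b) \<in> TupC G"
  unfolding TupC_def by (simp add: insert_commute) blast
lemma phiC_rot: "phiC (b,c,d,w,a) = phiC (a,b,c,d,w)" by (simp add: phiC_def insert_commute)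
lemma phiC_ref: "phiC (a,w,d,c,b) = phiC (a,b,c,d,w)" by (simp add: phiC_def insert_commute)

lemma card_TupC: "finite (fst G) \<Longrightarrow> 10 * card (phiC ` TupC G) \<le> card (TupC G)"
proof (rule card_fibers_ge)
  assume fin: "finite (fst G)"
  show "finite (TupC G)" unfolding TupC_def by (rule finite_Tup[OF fin])
  fix x assume x: "x \<in> TupC G"
  obtain a b c d w where t: "x = (a,b,c,d,w)" by (cases x) auto
  have "distinct [a,b,c,d,w]" using x t by (auto simp: TupC_def)
  hence c10: "card {(a,b,c,d,w),(b,c,d,w,a),(c,d,w,a,b),(d,w,a,b,c),(w,a,b,c,d),
     (a,w,d,c,b),(w,d,c,b,a),(d,c,b,a,w),(c,b,a,w,d),(b,a,w,d,c)} = 10" by auto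
  have sub: "{(a,b,c,d,w),(b,c,d,w,a),(c,d,w,a,b),(d,w,a,b,c),(w,a,b,c,d),
     (a,w,d,c,b),(w,d,c,b,a),(d,c,b,a,w),(c,b,a,w,d),(b,a,w,d,c)} \<subseteq> {y\<in>TupC G. phiC y = phiC x}"
  proof -
    have x0: "(a,b,c,d,w) \<in> TupC G" using x t by simp
    have x1: "(b,c,d,w,a) \<in> TupC G" by (rule TupC_rot[OF x0])
    have x2: "(c,d,w,a,b) \<in> TupC G" by (rule TupC_rot[OF x1])
    have x3: "(d,w,a,b,c) \<in> TupC G" by (rule TupC_rot[OF x2])
    have x4: "(w,a,b,c,d) \<in> TupC G" by (rule TupC_rot[OF x3])
    have y0: "(a,w,d,c,b) \<in> TupC G" by (rule TupC_ref[OF x0])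
    have y1: "(w,d,c,b,a) \<in> TupC G" by (rule TupC_rot[OF y0])
    have y2: "(d,c,b,a,w) \<in> TupC G" by (rule TupC_rot[OF y1])
    have y3: "(c,b,a,w,d) \<in> TupC G" by (rule TupC_rot[OF y2])
    have y4: "(b,a,w,d,c) \<in> TupC G" by (rule TupC_rot[OF y3])
    have p1: "phiC (b,c,d,w,a) = phiC x" using t phiC_rot by metis
    have p2: "phiC (c,d,w,a,b) = phiC x" using p1 phiC_rot by metis
    have p3: "phiC (d,w,a,b,c) = phiC x" using p2 phiC_rot by metis
    have p4: "phiC (w,a,b,c,d) = phiC x" using p3 phiC_rot by metis
    have q0: "phiC (a,w,d,c,b) = phiC x" using t phiC_ref by metis
    have q1: "phiC (w,d,c,b,a) = phiC x" using q0 phiC_rot by metis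
    have q2: "phiC (d,c,b,a,w) = phiC x" using q1 phiC_rot by metis
    have q3: "phiC (c,b,a,w,d) = phiC x" using q2 phiC_rot by metis
    have q4: "phiC (b,a,w,d,c) = phiC x" using q3 phiC_rot by metis
    show ?thesis unfolding insert_subset mem_Collect_eq
      using x0 x1 x2 x3 x4 y0 y1 y2 y3 y4 p1 p2 p3 p4 q0 q1 q2 q3 q4 t
      by (intro conjI empty_subsetI) (simp_all only: refl)
  qed
  have fin2: "finite {y\<in>TupC G. phiC y = phiC x}"
    using \<open>finite (TupC G)\<close> by auto
  show "10 \<le> card {y\<in>TupC G. phiC y = phiC x}"
    using card_mono[OF fin2 sub] unfolding c10 .
qed

locale sg =
  fixes V :: "'a set" and E :: "'a set set"
  assumes finV: "finite V" and edges: "\<And>e. e \<in> E \<Longrightarrow> card e = 2 \<and> e \<subseteq> V"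
begin

definition N where "N a = {b \<in> V. {a,b} \<in> E}"
definition deg where "deg a = card (N a)"
definition Arc where "Arc = Sigma V N"

lemma edge_ne: "{a,b} \<in> E \<Longrightarrow> a \<noteq> b"
  using edges by fastforce
lemma edge_V: "{a,b} \<in> E \<Longrightarrow> a \<in> V \<and> b \<in> V"
  using edges by blast
lemma N_sub: "N a \<subseteq> V" unfolding N_def by auto
lemma finN: "finite (N a)" using finite_subset[OF N_sub finV] .
lemma N_iff: "b \<in> N a \<longleftrightarrow> {a,b} \<in> E" unfolding N_def using edge_V by auto
lemma N_sym: "b \<in> N a \<longleftrightarrow> a \<in> N b" unfolding N_iff by (simp add: insert_commute)
lemma notin_N: "a \<notin> N a" unfolding N_iff using edge_ne[of a a] by auto
lemma deg_le: "deg a \<le> card V" unfolding deg_def by (rule card_mono[OF finV N_sub])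
lemma Arc_iff: "(a,b) \<in> Arc \<longleftrightarrow> {a,b} \<in> E" unfolding Arc_def using edge_V N_iff by auto
lemma finArc: "finite Arc" unfolding Arc_def using finV finN by auto

lemma card_Arc: "card Arc = (\<Sum>a\<in>V. deg a)"
  unfolding Arc_def deg_def using finV finN by simp

lemma Arc_swap: "prod.swap ` Arc = Arc"
  by (auto simp: Arc_iff image_iff insert_commute) (metis Arc_iff insert_commute swap_simp)

lemma sum_Arc_fst: "(\<Sum>p\<in>Arc. f (fst p)) = (\<Sum>a\<in>V. of_nat (deg a) * f a)"
proof -
  have "(\<Sum>p\<in>Arc. f (fst p)) = (\<Sum>(x,y)\<in>Sigma V N. f x)"
    unfolding Arc_def by (rule sum.cong) auto
  also have "\<dots> = (\<Sum>x\<in>V. \<Sum>y\<in>N x. f x)"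
    by (rule sum.Sigma[symmetric]) (use finV finN in auto)
  finally show ?thesis by (simp add: deg_def)
qed

lemma sum_Arc_snd: "(\<Sum>p\<in>Arc. f (snd p)) = (\<Sum>p\<in>Arc. f (fst p))"
proof -
  have "(\<Sum>p\<in>Arc. f (snd p)) = (\<Sum>p\<in>prod.swap ` Arc. f (fst p))"
    by (subst sum.reindex) (auto simp: inj_on_def)
  thus ?thesis unfolding Arc_swap .
qed

end

context sg begin

lemma Arc_mem: "(a,b) \<in> Arc \<longleftrightarrow> a \<in> V \<and> b \<in> N a" unfolding Arc_def by auto

lemma card_avoid:
  assumes ab: "(a,b) \<in> Arc"
  shows "int (card {q\<in>Arc. fst q \<notin> {a,b} \<and> snd q \<notin> {a,b}}) = int (card Arc) + 2 - 2*deg a - 2*deg b"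
proof -
  have bNa: "b \<in> N a" and aNb: "a \<in> N b" and aV: "a \<in> V" and bV: "b \<in> V" and ne: "a \<noteq> b"
    using ab N_sym[of b a] Arc_mem[of a b] N_sub[of a] notin_N[of a] by auto
  define T where "T = ({a}\<times>N a) \<union> ({b}\<times>N b) \<union> ((N a - {b})\<times>{a}) \<union> ((N b - {a})\<times>{b})"
  have TA: "T \<subseteq> Arc" unfolding T_def Arc_mem using aV bV N_sub N_sym by (auto simp: Arc_def)
  have eq: "{q\<in>Arc. fst q \<notin> {a,b} \<and> snd q \<notin> {a,b}} = Arc - T"
    unfolding T_def Arc_def using N_sym by auto
  have d1: "({a}\<times>N a) \<inter> ({b}\<times>N b) = {}" using ne by auto
  have d2: "(({a}\<times>N a) \<union> ({b}\<times>N b)) \<inter> ((N a - {b})\<times>{a}) = {}" using notin_N by auto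
  have d3: "(({a}\<times>N a) \<union> ({b}\<times>N b) \<union> ((N a - {b})\<times>{a})) \<inter> ((N b - {a})\<times>{b}) = {}"
    using notin_N ne by auto
  have c1: "card (N a - {b}) = deg a - 1" using bNa finN by (simp add: deg_def)
  have c2: "card (N b - {a}) = deg b - 1" using aNb finN by (simp add: deg_def)
  have pa: "deg a \<ge> 1" "deg b \<ge> 1" using bNa aNb finN unfolding deg_def
    by (auto simp: Suc_le_eq card_gt_0_iff)
  have "card T = deg a + deg b + (deg a - 1) + (deg b - 1)"
    unfolding T_def
    apply (subst card_Un_disjoint[OF _ _ d3], use finN in simp, use finN in simp)
    apply (subst card_Un_disjoint[OF _ _ d2], use finN in simp, use finN in simp)
    apply (subst card_Un_disjoint[OF _ _ d1], use finN in simp, use finN in simp)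
    using c1 c2 by (simp add: card_cartesian_product deg_def)
  moreover have "card (Arc - T) = card Arc - card T"
    by (rule card_Diff_subset) (use finite_subset[OF TA finArc] TA in auto)
  moreover have "card T \<le> card Arc" by (rule card_mono[OF finArc TA])
  ultimately show ?thesis unfolding eq using pa by simp
qed

end

context sg begin

definition P2 where "P2 = Sigma Arc (\<lambda>p. {q\<in>Arc. fst q \<notin> {fst p, snd p} \<and> snd q \<notin> {fst p, snd p}})"

lemma finP2: "finite P2" unfolding P2_def using finArc by auto

lemma card_P2: "int (card P2) = int (card Arc) * (int (card Arc) + 2) - 4 * (\<Sum>a\<in>V. int (deg a)^2)"
proof -
  have "int (card P2) = (\<Sum>p\<in>Arc. int (card {q\<in>Arc. fst q \<notin> {fst p, snd p} \<and> snd q \<notin> {fst p, snd p}}))"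
    unfolding P2_def using finArc by (simp add: of_nat_sum)
  also have "\<dots> = (\<Sum>p\<in>Arc. int (card Arc) + 2 - 2 * int (deg (fst p)) - 2 * int (deg (snd p)))"
  proof (rule sum.cong[OF refl])
    fix p assume "p \<in> Arc"
    thus "int (card {q\<in>Arc. fst q \<notin> {fst p, snd p} \<and> snd q \<notin> {fst p, snd p}}) =
       int (card Arc) + 2 - 2 * int (deg (fst p)) - 2 * int (deg (snd p))"
      using card_avoid[of "fst p" "snd p"] by simp
  qed
  also have "\<dots> = int (card Arc) * (int (card Arc) + 2) - 2 * (\<Sum>p\<in>Arc. int (deg (fst p)))
       - 2 * (\<Sum>p\<in>Arc. int (deg (snd p)))"
    by (simp add: sum_subtractf sum.distrib sum_distrib_left algebra_simps)
  also have "(\<Sum>p\<in>Arc. int (deg (snd p))) = (\<Sum>p\<in>Arc. int (deg (fst p)))"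
    by (rule sum_Arc_snd)
  also have "(\<Sum>p\<in>Arc. int (deg (fst p))) = (\<Sum>a\<in>V. int (deg a)^2)"
    using sum_Arc_fst[of "\<lambda>a. int (deg a)"] by (simp add: power2_eq_square)
  finally show ?thesis by simp
qed

lemma TupM_eq: "TupM (V,E) = (\<lambda>(((a,b),(c,d)),w). (a,b,c,d,w)) ` Sigma P2 (\<lambda>((a,b),(c,d)). V - {a,b,c,d})"
proof (intro equalityI subsetI)
  fix t assume "t \<in> TupM (V,E)"
  then obtain a b c d w where t: "t = (a,b,c,d,w)" and h: "distinct [a,b,c,d,w]" "{a,b,c,d,w} \<subseteq> V"
    "{a,b} \<in> E" "{c,d} \<in> E" unfolding TupM_def by auto
  have "(((a,b),(c,d)),w) \<in> Sigma P2 (\<lambda>((a,b),(c,d)). V - {a,b,c,d})"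
    using h unfolding P2_def Arc_iff by (auto simp: Arc_iff)
  thus "t \<in> (\<lambda>(((a,b),(c,d)),w). (a,b,c,d,w)) ` Sigma P2 (\<lambda>((a,b),(c,d)). V - {a,b,c,d})"
    unfolding t by force
next
  fix t assume "t \<in> (\<lambda>(((a,b),(c,d)),w). (a,b,c,d,w)) ` Sigma P2 (\<lambda>((a,b),(c,d)). V - {a,b,c,d})"
  then obtain x where x: "x \<in> Sigma P2 (\<lambda>((a,b),(c,d)). V - {a,b,c,d})"
    and tx: "t = (\<lambda>(((a,b),(c,d)),w). (a,b,c,d,w)) x" by blast
  obtain a b c d w where xx: "x = (((a,b),(c,d)),w)" by (metis surj_pair)
  have t: "t = (a,b,c,d,w)" and h: "((a,b),(c,d)) \<in> P2" "w \<in> V - {a,b,c,d}"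
    using x tx unfolding xx by auto
  have "{a,b} \<in> E" "{c,d} \<in> E" using h unfolding P2_def by (auto simp: Arc_iff)
  moreover have "a \<noteq> b" "c \<noteq> d" using calculation edge_ne by auto
  moreover have "{a,b,c,d} \<subseteq> V" using calculation edge_V by auto
  ultimately show "t \<in> TupM (V,E)" using h unfolding t TupM_def P2_def by auto
qed

lemma card_TupM_V: "int (card (TupM (V,E))) = int (card V - 4) * int (card P2)"
proof -
  have inj: "inj_on (\<lambda>(((a,b),(c,d)),w). (a,b,c,d,w)) (Sigma P2 (\<lambda>((a,b),(c,d)). V - {a,b,c,d}))"
    by (auto simp: inj_on_def)
  have "card (TupM (V,E)) = card (Sigma P2 (\<lambda>((a,b),(c,d)). V - {a,b,c,d}))"
    unfolding TupM_eq by (rule card_image[OF inj])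
  also have "\<dots> = (\<Sum>p\<in>P2. card ((\<lambda>((a,b),(c,d)). V - {a,b,c,d}) p))"
    by (rule card_SigmaI) (use finP2 finV in auto)
  also have "\<dots> = (\<Sum>p\<in>P2. card V - 4)"
  proof (rule sum.cong[OF refl])
    fix p assume "p \<in> P2"
    then obtain a b c d where p: "p = ((a,b),(c,d))" and "{a,b} \<in> E" "{c,d} \<in> E" "c \<notin> {a,b}" "d \<notin> {a,b}"
      unfolding P2_def by (auto simp: Arc_iff)
    moreover have "a \<noteq> b" "c \<noteq> d" using calculation edge_ne by auto
    moreover have "{a,b,c,d} \<subseteq> V" using calculation edge_V by auto
    ultimately have "card (V - {a,b,c,d}) = card V - 4"
      by (subst card_Diff_subset) (auto simp: finV)
    thus "card ((\<lambda>((a,b),(c,d)). V - {a,b,c,d}) p) = card V - 4" unfolding p by simp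
  qed
  finally show ?thesis by simp
qed

end

context sg begin

definition TMa where "TMa = {t\<in>TupM (V,E). case t of (a,b,c,d,w) \<Rightarrow> {a,w} \<in> E}"
definition TMb where "TMb = {t\<in>TupM (V,E). case t of (a,b,c,d,w) \<Rightarrow> {b,w} \<in> E}"

lemma card_TupP_TMb: "card (TupP (V,E)) = card TMb"
proof -
  let ?g = "\<lambda>(a,b,c,d,w). (a,b,d,w,c)"
  have inj: "inj_on ?g (TupP (V,E))" by (auto simp: inj_on_def)
  have "?g ` TupP (V,E) = TMb"
  proof (intro equalityI subsetI)
    fix x assume "x \<in> ?g ` TupP (V,E)"
    then obtain a b c d w where "x = (a,b,d,w,c)" "(a,b,c,d,w) \<in> TupP (V,E)" by auto
    thus "x \<in> TMb" unfolding TMb_def TupM_def TupP_def by auto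
  next
    fix x assume x: "x \<in> TMb"
    obtain a b d w c where xx: "x = (a,b,d,w,c)" by (metis surj_pair)
    have "(a,b,c,d,w) \<in> TupP (V,E)" using x unfolding xx TMb_def TupM_def TupP_def by auto
    thus "x \<in> ?g ` TupP (V,E)" unfolding xx by force
  qed
  thus ?thesis using card_image[OF inj] by simp
qed

lemma card_TMa_TMb: "card TMa = card TMb"
proof -
  let ?g = "\<lambda>(a,b,c,d,w). (b,a,c,d,w)"
  have inj: "inj_on ?g TMb" by (auto simp: inj_on_def)
  have "?g ` TMb = TMa"
  proof (intro equalityI subsetI)
    fix x assume "x \<in> ?g ` TMb"
    then obtain a b c d w where "x = (b,a,c,d,w)" "(a,b,c,d,w) \<in> TMb" by auto
    thus "x \<in> TMa" unfolding TMb_def TMa_def TupM_def by (auto simp: insert_commute)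
  next
    fix x assume x: "x \<in> TMa"
    obtain b a c d w where xx: "x = (b,a,c,d,w)" by (metis surj_pair)
    have "(a,b,c,d,w) \<in> TMb" using x unfolding xx TMb_def TMa_def TupM_def by (auto simp: insert_commute)
    thus "x \<in> ?g ` TMb" unfolding xx by force
  qed
  thus ?thesis using card_image[OF inj] by simp
qed

lemma TMab_sub: "TMa \<union> TMb \<subseteq> TupM (V,E)" unfolding TMa_def TMb_def by auto

lemma finTupM: "finite (TupM (V,E))" unfolding TupM_def using finite_Tup[of "(V,E)"] finV by simp

end

locale tf = sg +
  assumes tfree: "\<not> (\<exists>a b c. {a,b} \<in> E \<and> {b,c} \<in> E \<and> {a,c} \<in> E \<and> a \<noteq> b \<and> b \<noteq> c \<and> a \<noteq> c)"
begin

lemma no_tri: "{a,b} \<in> E \<Longrightarrow> {b,c} \<in> E \<Longrightarrow> {a,c} \<in> E \<Longrightarrow> False"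
  using tfree edge_ne by blast

lemma disjN: "{a,b} \<in> E \<Longrightarrow> N a \<inter> N b = {}"
proof (rule ccontr)
  assume ab: "{a,b} \<in> E" and "N a \<inter> N b \<noteq> {}"
  then obtain x where "{a,x} \<in> E" "{b,x} \<in> E" unfolding N_iff by (auto simp: N_iff)
  thus False using no_tri[of a b x] ab by (simp add: insert_commute)
qed

lemma deg_sum: "{a,b} \<in> E \<Longrightarrow> deg a + deg b \<le> card V"
proof -
  assume ab: "{a,b} \<in> E"
  have "deg a + deg b = card (N a \<union> N b)"
    unfolding deg_def by (rule card_Un_disjoint[symmetric]) (use finN disjN[OF ab] in auto)
  also have "\<dots> \<le> card V" by (rule card_mono[OF finV]) (use N_sub in auto)
  finally show ?thesis .
qed

lemma TMab_disj: "TMa \<inter> TMb = {}"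
  unfolding TMa_def TMb_def TupM_def using no_tri by (auto simp: insert_commute)

lemma TupP_le: "2 * card (TupP (V,E)) \<le> card (TupM (V,E))"
proof -
  have "card TMa + card TMb = card (TMa \<union> TMb)"
    by (rule card_Un_disjoint[symmetric])
       (use finite_subset[OF TMab_sub finTupM] TMab_disj in auto)
  also have "\<dots> \<le> card (TupM (V,E))" by (rule card_mono[OF finTupM TMab_sub])
  finally show ?thesis using card_TMa_TMb card_TupP_TMb by simp
qed

end

context tf begin

lemma prod_bound:
  assumes ab: "(a,b) \<in> Arc" and d: "d \<in> V - (N a \<union> N b)"
  shows "4 * (card (N b \<inter> N d) * card (N a \<inter> N d)) \<le> (card V - 3)^2"
proof -
  have abE: "{a,b} \<in> E" using ab Arc_iff by auto
  have aV: "a \<in> V" "b \<in> V" using edge_V[OF abE] by auto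
  have ne: "a \<noteq> b" using edge_ne[OF abE] .
  have dV: "d \<in> V" and dna: "d \<notin> N a" and dnb: "d \<notin> N b" using d by auto
  have bNa: "b \<in> N a" and aNb: "a \<in> N b" using abE N_iff N_sym by auto
  have "d \<noteq> a" "d \<noteq> b" using dna dnb bNa aNb by auto
  have disj: "(N b \<inter> N d) \<inter> (N a \<inter> N d) = {}" using disjN[OF abE] by auto
  have sub: "(N b \<inter> N d) \<union> (N a \<inter> N d) \<subseteq> V - {a,b,d}"
    using N_sub notin_N N_sym dna dnb by blast
  have "card (N b \<inter> N d) + card (N a \<inter> N d) = card ((N b \<inter> N d) \<union> (N a \<inter> N d))"
    by (rule card_Un_disjoint[symmetric]) (use finN disj in auto)
  also have "\<dots> \<le> card (V - {a,b,d})" by (rule card_mono) (use finV sub in auto)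
  also have "\<dots> = card V - 3"
    using aV dV \<open>d \<noteq> a\<close> \<open>d \<noteq> b\<close> ne by (subst card_Diff_subset) (auto simp: finV)
  finally have s: "card (N b \<inter> N d) + card (N a \<inter> N d) \<le> card V - 3" .
  define x where "x = card (N b \<inter> N d)"
  define y where "y = card (N a \<inter> N d)"
  have "4 * (x * y) \<le> (x + y)^2"
  proof -
    have "int (4 * (x * y)) \<le> int ((x + y)^2)"
      using zero_le_power2[of "int x - int y"] by (simp add: power2_eq_square algebra_simps)
    thus ?thesis by linarith
  qed
  also have "\<dots> \<le> (card V - 3)^2" using s unfolding x_def y_def by (rule power_mono) simp
  finally show ?thesis unfolding x_def y_def .
qed

lemma card_W: "(a,b) \<in> Arc \<Longrightarrow> card (V - (N a \<union> N b)) = card V - deg a - deg b"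
proof -
  assume ab: "(a,b) \<in> Arc"
  have abE: "{a,b} \<in> E" using ab Arc_iff by auto
  have "card (N a \<union> N b) = deg a + deg b"
    unfolding deg_def by (rule card_Un_disjoint) (use finN disjN[OF abE] in auto)
  thus ?thesis by (subst card_Diff_subset) (use finN N_sub finV in auto)
qed

lemma TupC_bound:
  "4 * card (TupC (V,E)) \<le> (card V - 3)^2 * (\<Sum>p\<in>Arc. card V - deg (fst p) - deg (snd p))"
proof -
  define S where "S = Sigma Arc (\<lambda>(a,b). Sigma (V - (N a \<union> N b)) (\<lambda>d. (N b \<inter> N d) \<times> (N a \<inter> N d)))"
  define f where "f = (\<lambda>((a::'a,b::'a),(d::'a,(c::'a,w::'a))). (a,b,c,d,w))"
  have sub: "TupC (V,E) \<subseteq> f ` S"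
  proof
    fix t assume t: "t \<in> TupC (V,E)"
    then obtain a b c d w where tt: "t = (a,b,c,d,w)" and h: "distinct [a,b,c,d,w]" "{a,b,c,d,w} \<subseteq> V"
      "{a,b} \<in> E" "{b,c} \<in> E" "{c,d} \<in> E" "{d,w} \<in> E" "{w,a} \<in> E"
      unfolding TupC_def by auto
    have "d \<notin> N a"
    proof
      assume "d \<in> N a" hence "{a,d} \<in> E" by (simp add: N_iff)
      thus False using no_tri[of a d w] h by (simp add: insert_commute)
    qed
    moreover have "d \<notin> N b"
    proof
      assume "d \<in> N b" hence "{b,d} \<in> E" by (simp add: N_iff)
      thus False using no_tri[of b c d] h by (simp add: insert_commute)
    qed
    moreover have "c \<in> N b \<inter> N d" "w \<in> N a \<inter> N d" using h by (auto simp: N_iff insert_commute)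
    ultimately have "((a,b),(d,(c,w))) \<in> S" unfolding S_def using h by (auto simp: Arc_iff)
    thus "t \<in> f ` S" unfolding tt f_def by force
  qed
  have finS: "finite S" unfolding S_def using finArc finV finN by auto
  have "card (TupC (V,E)) \<le> card S"
    using card_mono[OF finite_imageI[OF finS] sub] card_image_le[OF finS, of f] by linarith
  also have "card S = (\<Sum>p\<in>Arc. \<Sum>d\<in>V - (N (fst p) \<union> N (snd p)). card (N (snd p) \<inter> N d) * card (N (fst p) \<inter> N d))"
    unfolding S_def
    by (subst card_SigmaI) (auto simp: finArc finV finN split_def intro!: sum.cong card_SigmaI)
  finally have "4 * card (TupC (V,E)) \<le> (\<Sum>p\<in>Arc. \<Sum>d\<in>V - (N (fst p) \<union> N (snd p)).
       4 * (card (N (snd p) \<inter> N d) * card (N (fst p) \<inter> N d)))"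
    by (simp only: sum_distrib_left[symmetric])
  also have "\<dots> \<le> (\<Sum>p\<in>Arc. \<Sum>d\<in>V - (N (fst p) \<union> N (snd p)). (card V - 3)^2)"
    by (intro sum_mono) (use prod_bound in force)
  also have "\<dots> = (\<Sum>p\<in>Arc. (card V - 3)^2 * (card V - deg (fst p) - deg (snd p)))"
    by (intro sum.cong refl) (simp add: card_W)
  finally show ?thesis by (simp add: sum_distrib_left)
qed

lemma Q_eq: "int (\<Sum>p\<in>Arc. card V - deg (fst p) - deg (snd p)) =
   int (card V) * int (card Arc) - 2 * (\<Sum>a\<in>V. int (deg a)^2)"
proof -
  have "int (\<Sum>p\<in>Arc. card V - deg (fst p) - deg (snd p)) =
     (\<Sum>p\<in>Arc. int (card V) - int (deg (fst p)) - int (deg (snd p)))"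
    unfolding of_nat_sum
  proof (rule sum.cong[OF refl])
    fix p assume "p \<in> Arc"
    hence "deg (fst p) + deg (snd p) \<le> card V" using deg_sum Arc_iff[of "fst p" "snd p"] by simp
    thus "int (card V - deg (fst p) - deg (snd p)) = int (card V) - int (deg (fst p)) - int (deg (snd p))"
      by linarith
  qed
  also have "\<dots> = int (card V) * int (card Arc) - (\<Sum>p\<in>Arc. int (deg (fst p))) - (\<Sum>p\<in>Arc. int (deg (snd p)))"
    by (simp add: sum_subtractf)
  also have "(\<Sum>p\<in>Arc. int (deg (snd p))) = (\<Sum>p\<in>Arc. int (deg (fst p)))" by (rule sum_Arc_snd)
  also have "(\<Sum>p\<in>Arc. int (deg (fst p))) = (\<Sum>a\<in>V. int (deg a)^2)"
    using sum_Arc_fst[of "\<lambda>a. int (deg a)"] by (simp add: power2_eq_square)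
  finally show ?thesis by simp
qed

end

lemma poly_fact:
  fixes n E :: real
  assumes n5: "n \<ge> 5" and E1: "n^2 - 1 \<le> 4*E"
  shows "n * (n^2 + 4*n - 31) \<le> 10*(n-4)*(E + n^2/5 + 1 - n)"
proof -
  have "10*(n-4)*((n^2-1)/4 + n^2/5 + 1 - n) \<le> 10*(n-4)*(E + n^2/5 + 1 - n)"
    using n5 E1 by (intro mult_left_mono) auto
  moreover have "10*(n-4)*((n^2-1)/4 + n^2/5 + 1 - n) - n * (n^2 + 4*n - 31) = (n-5)*(7/2*n^2 - 29/2*n + 6)"
    by (simp add: power2_eq_square field_simps)
  moreover have "0 \<le> (n-5)*(7/2*n^2 - 29/2*n + 6)"
  proof -
    have "7/2*n^2 - 29/2*n + 6 = n*(7/2*n - 29/2) + 6" by (simp add: power2_eq_square algebra_simps)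
    moreover have "0 \<le> n*(7/2*n - 29/2)" using n5 by simp
    ultimately show ?thesis using n5 by simp
  qed
  ultimately show ?thesis by linarith
qed

lemma key_real:
  fixes n A S E :: real
  assumes n5: "n \<ge> 5" and cs: "A^2 \<le> n*S" and dg: "n*A - S \<le> n*E" and q0: "2*S \<le> n*A"
    and E1: "n^2 - 1 \<le> 4*E" and E2: "4*E \<le> n^2" and A0: "0 \<le> A"
  shows "5*(n-4)*(A*(A+2) - 4*S) + (n-3)^2*(n*A - 2*S) \<le> 5*(n-4)*(2*E*(2*E+2) - 4*n*E)"
proof -
  define e where "e = A/2"
  define Q where "Q = n*e - S"
  define K where "K = n^2 + 4*n - 31"
  have n0: "n > 0" using n5 by simp
  have K0: "K > 0" proof - have "n^2 \<ge> 25" using n5 mult_mono[OF n5 n5] by (simp add: power2_eq_square) thus ?thesis unfolding K_def using n5 by simp qed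
  have ident: "5*(n-4)*(2*E*(2*E+2) - 4*n*E) - (5*(n-4)*(A*(A+2) - 4*S) + (n-3)^2*(n*A - 2*S))
     = 2*(10*(n-4)*(E-e)*(E+e+1-n) - Q*K)"
    unfolding e_def Q_def K_def by (simp add: power2_eq_square algebra_simps)
  have Qge: "Q \<ge> 0" using q0 unfolding Q_def e_def by simp
  have QnD: "Q \<le> n*(E-e)" using dg unfolding Q_def e_def by (simp add: algebra_simps)
  have QC: "n*Q \<le> e*(n^2 - 4*e)" using cs unfolding Q_def e_def by (simp add: power2_eq_square algebra_simps)
  have e0: "e \<ge> 0" using A0 unfolding e_def by simp
  have main: "Q*K \<le> 10*(n-4)*(E-e)*(E+e+1-n)"
  proof (cases "e \<ge> n^2/5")
    case True
    have D0: "E - e \<ge> 0"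
    proof -
      have "0 \<le> n*(E-e)" using Qge QnD by linarith
      thus ?thesis using n0 by (simp add: zero_le_mult_iff)
    qed
    have "Q*K \<le> (n*(E-e))*K" using QnD K0 by (intro mult_right_mono) auto
    also have "\<dots> = (E-e)*(n*K)" by simp
    also have "\<dots> \<le> (E-e)*(10*(n-4)*(E + n^2/5 + 1 - n))"
      using poly_fact[OF n5 E1] D0 unfolding K_def by (intro mult_left_mono) auto
    also have "\<dots> \<le> (E-e)*(10*(n-4)*(E + e + 1 - n))"
      using True D0 n5 by (intro mult_left_mono) auto
    finally show ?thesis by (simp add: algebra_simps)
  next
    case False
    have "n^2 \<ge> 25" using n5 mult_mono[OF n5 n5] by (simp add: power2_eq_square)
    hence D1: "E - e \<ge> 1" using False E1 by simp
    have "n^2 - 4*e \<le> 5*(E-e)" using E1 D1 by simp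
    hence "e*(n^2 - 4*e) \<le> e*(5*(E-e))" using e0 by (intro mult_left_mono) auto
    hence nQ: "n*Q \<le> 5*e*(E-e)" using QC by (simp add: algebra_simps)
    have E0: "E + 1 - n \<ge> 0"
    proof -
      have "(n-1)*(n-3) \<ge> 0" using n5 by simp
      hence "n^2 - 4*n + 3 \<ge> 0" by (simp add: power2_eq_square algebra_simps)
      thus ?thesis using E1 by simp
    qed
    have lin: "e*K \<le> 2*n*(n-4)*(E+e+1-n)"
    proof (cases "K - 2*n*(n-4) \<le> 0")
      case True
      have "e*(K - 2*n*(n-4)) \<le> 0" using True e0 by (simp add: mult_nonneg_nonpos)
      moreover have "0 \<le> 2*n*(n-4)*(E+1-n)" using n5 E0 by simp
      ultimately show ?thesis by (simp add: algebra_simps)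
    next
      case c: False
      have "e*(K - 2*n*(n-4)) \<le> (n^2/5)*(K - 2*n*(n-4))"
        using False c by (intro mult_right_mono) auto
      also have "\<dots> \<le> 2*n*(n-4)*(E+1-n)"
      proof -
        have "n*(n*K) \<le> n*(10*(n-4)*(E + n^2/5 + 1 - n))"
          using poly_fact[OF n5 E1] n0 unfolding K_def by (intro mult_left_mono) auto
        thus ?thesis by (simp add: power2_eq_square algebra_simps)
      qed
      finally show ?thesis by (simp add: algebra_simps)
    qed
    have "n*(Q*K) \<le> (5*e*(E-e))*K" using nQ K0 by (simp add: mult.assoc[symmetric] mult_right_mono)
    also have "\<dots> = 5*(E-e)*(e*K)" by simp
    also have "\<dots> \<le> 5*(E-e)*(2*n*(n-4)*(E+e+1-n))"
      using lin D1 by (intro mult_left_mono) auto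
    also have "\<dots> = n*(10*(n-4)*(E-e)*(E+e+1-n))" by (simp add: algebra_simps)
    finally show ?thesis using n0 by simp
  qed
  have "0 \<le> 2*(10*(n-4)*(E-e)*(E+e+1-n) - Q*K)" using main by simp
  hence "0 \<le> 5*(n-4)*(2*E*(2*E+2) - 4*n*E) - (5*(n-4)*(A*(A+2) - 4*S) + (n-3)^2*(n*A - 2*S))"
    unfolding ident .
  thus ?thesis by simp
qed

lemma quarter_bound:
  fixes d n :: nat
  assumes "d \<le> n"
  shows "d * (n - d) \<le> n * n div 4"
proof -
  have "int (4 * (d * (n - d))) \<le> int (n * n)"
    using zero_le_power2[of "int n - 2 * int d"] assms by (simp add: power2_eq_square algebra_simps of_nat_diff)
  hence "4 * (d * (n - d)) \<le> n * n" by linarith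
  thus ?thesis by linarith
qed

lemma quarter_real:
  fixes n :: nat
  shows "real n ^ 2 - 1 \<le> 4 * real (n * n div 4) \<and> 4 * real (n * n div 4) \<le> real n ^ 2"
proof (cases "even n")
  case True
  then obtain k where "n = 2*k" by blast
  thus ?thesis by (simp add: power2_eq_square)
next
  case False
  then obtain k where k: "n = 2*k+1" using oddE by blast
  have "n * n div 4 = k*k + k" unfolding k by (simp add: algebra_simps)
  thus ?thesis unfolding k by (simp add: power2_eq_square algebra_simps)
qed

context tf begin

lemma cauchy_deg: "(real (card Arc))^2 \<le> real (card V) * (\<Sum>a\<in>V. real (deg a)^2)"
  using cauchy_sum[OF finV, of "\<lambda>a. real (deg a)"] unfolding card_Arc by simp

lemma deg_quarter: "real (card V) * real (card Arc) - (\<Sum>a\<in>V. real (deg a)^2)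
     \<le> real (card V) * real (card V * card V div 4)"
proof -
  have "real (card V) * real (card Arc) - (\<Sum>a\<in>V. real (deg a)^2)
     = (\<Sum>a\<in>V. real (deg a) * (real (card V) - real (deg a)))"
    unfolding card_Arc by (simp add: sum_distrib_left sum_subtractf power2_eq_square algebra_simps)
  also have "\<dots> \<le> (\<Sum>a\<in>V. real (card V * card V div 4))"
  proof (rule sum_mono)
    fix a assume "a \<in> V"
    have "deg a * (card V - deg a) \<le> card V * card V div 4" by (rule quarter_bound[OF deg_le])
    hence "real (deg a * (card V - deg a)) \<le> real (card V * card V div 4)" by linarith
    thus "real (deg a) * (real (card V) - real (deg a)) \<le> real (card V * card V div 4)"
      using deg_le[of a] by (simp add: of_nat_diff)
  qed
  finally show ?thesis by simp
qed

lemma empty_small: "card V < 5 \<Longrightarrow> TupM (V,E) = {} \<and> TupC (V,E) = {} \<and> TupP (V,E) = {}"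
proof -
  assume c: "card V < 5"
  have "False" if "distinct [a,b,c,d,w]" "{a,b,c,d,w} \<subseteq> V" for a b c d w
  proof -
    have "card {a,b,c,d,w} = 5" using that(1) by simp
    moreover have "card {a,b,c,d,w} \<le> card V" by (rule card_mono[OF finV that(2)])
    ultimately show False using c by simp
  qed
  hence H: "\<And>a b c d w. distinct [a,b,c,d,w] \<Longrightarrow> {a,b,c,d,w} \<subseteq> V \<Longrightarrow> False" by blast
  have "TupM (V,E) = {}"
  proof (rule equals0I)
    fix t assume "t \<in> TupM (V,E)"
    then obtain a b c d w where "distinct [a,b,c,d,w]" "{a,b,c,d,w} \<subseteq> V" unfolding TupM_def by auto
    thus False by (rule H)
  qed
  moreover have "TupC (V,E) = {}"
  proof (rule equals0I)
    fix t assume "t \<in> TupC (V,E)"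
    then obtain a b c d w where "distinct [a,b,c,d,w]" "{a,b,c,d,w} \<subseteq> V" unfolding TupC_def by auto
    thus False by (rule H)
  qed
  moreover have "TupP (V,E) = {}"
  proof (rule equals0I)
    fix t assume "t \<in> TupP (V,E)"
    then obtain a b c d w where "distinct [a,b,c,d,w]" "{a,b,c,d,w} \<subseteq> V" unfolding TupP_def by auto
    thus False by (rule H)
  qed
  ultimately show ?thesis by blast
qed

lemma numM: "8 * num_copies graph_M (V,E) = card (TupM (V,E))"
  unfolding num_copies_def copies_M using card_TupM[of "(V,E)"] finV by simp
lemma numP: "4 * num_copies graph_M' (V,E) = card (TupP (V,E))"
  unfolding num_copies_def copies_P using card_TupP[of "(V,E)"] finV by simp
lemma numC: "10 * num_copies graph_C5 (V,E) \<le> card (TupC (V,E))"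
  unfolding num_copies_def copies_C using card_TupC[of "(V,E)"] finV by simp

lemma numP_le: "num_copies graph_M' (V,E) \<le> num_copies graph_M (V,E)"
  using numM numP TupP_le by simp

lemma bound_main:
  "real (num_copies graph_M (V,E)) + real (num_copies graph_C5 (V,E)) \<le>
   (real (card V) - 4) * (2 * real (card V * card V div 4) * (2 * real (card V * card V div 4) + 2)
     - 4 * real (card V) * real (card V * card V div 4)) / 8"
proof (cases "card V < 5")
  case True
  hence "num_copies graph_M (V,E) = 0" "num_copies graph_C5 (V,E) = 0"
    using empty_small numM numC by auto
  moreover have "0 \<le> (real (card V) - 4) * (2 * real (card V * card V div 4) * (2 * real (card V * card V div 4) + 2)
     - 4 * real (card V) * real (card V * card V div 4))"
  proof -
    have "card V = 0 \<or> card V = 1 \<or> card V = 2 \<or> card V = 3 \<or> card V = 4" using True by linarith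
    thus ?thesis by (elim disjE) simp_all
  qed
  ultimately show ?thesis by simp
next
  case False
  define n where "n = real (card V)"
  define A where "A = real (card Arc)"
  define S where "S = (\<Sum>a\<in>V. real (deg a)^2)"
  define Eq where "Eq = real (card V * card V div 4)"
  have n5: "n \<ge> 5" using False unfolding n_def by simp
  have M8: "8 * real (num_copies graph_M (V,E)) = (n - 4) * (A*(A+2) - 4*S)"
  proof -
    have "real_of_int (int (card (TupM (V,E)))) = real_of_int (int (card V - 4) * int (card P2))"
      using card_TupM_V by simp
    hence "real (card (TupM (V,E))) = real (card V - 4) * real_of_int (int (card P2))" by simp
    also have "real_of_int (int (card P2)) = A*(A+2) - 4*S"
      unfolding A_def S_def using arg_cong[OF card_P2, of real_of_int] by simp
    finally show ?thesis using numM[symmetric] False unfolding n_def by (simp add: of_nat_diff)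
  qed
  have C40: "40 * real (num_copies graph_C5 (V,E)) \<le> (n-3)^2 * (n*A - 2*S)"
  proof -
    have "40 * num_copies graph_C5 (V,E) \<le> 4 * card (TupC (V,E))" using numC by simp
    also have "\<dots> \<le> (card V - 3)^2 * (\<Sum>p\<in>Arc. card V - deg (fst p) - deg (snd p))" by (rule TupC_bound)
    finally have h: "40 * num_copies graph_C5 (V,E) \<le>
        (card V - 3)^2 * (\<Sum>p\<in>Arc. card V - deg (fst p) - deg (snd p))" .
    have h': "real (40 * num_copies graph_C5 (V,E)) \<le>
        real ((card V - 3)^2) * real (\<Sum>p\<in>Arc. card V - deg (fst p) - deg (snd p))"
      unfolding of_nat_mult[symmetric] of_nat_le_iff by (rule h)
    have Y: "real (\<Sum>p\<in>Arc. card V - deg (fst p) - deg (snd p)) = n*A - 2*S"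
      unfolding n_def A_def S_def using arg_cong[OF Q_eq, of real_of_int] by simp
    have X: "real ((card V - 3)^2) = (n-3)^2" unfolding n_def of_nat_power using False by (simp add: of_nat_diff)
    show ?thesis using h' unfolding X Y by simp
  qed
  have q0: "2*S \<le> n*A"
  proof -
    have "0 \<le> real (\<Sum>p\<in>Arc. card V - deg (fst p) - deg (snd p))" by (rule of_nat_0_le_iff)
    also have "real (\<Sum>p\<in>Arc. card V - deg (fst p) - deg (snd p)) = n*A - 2*S"
      unfolding n_def A_def S_def using arg_cong[OF Q_eq, of real_of_int] by simp
    finally show ?thesis by simp
  qed
  have c1: "A^2 \<le> n*S" using cauchy_deg unfolding n_def A_def S_def .
  have c2: "n*A - S \<le> n*Eq" using deg_quarter unfolding n_def A_def S_def Eq_def .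
  have c3: "n^2 - 1 \<le> 4*Eq" "4*Eq \<le> n^2" using quarter_real[of "card V"] unfolding n_def Eq_def by auto
  have c4: "0 \<le> A" unfolding A_def by simp
  have key: "5*(n-4)*(A*(A+2) - 4*S) + (n-3)^2*(n*A - 2*S) \<le> 5*(n-4)*(2*Eq*(2*Eq+2) - 4*n*Eq)"
    by (rule key_real[OF n5 c1 c2 q0 c3 c4])
  show ?thesis unfolding n_def[symmetric] Eq_def[symmetric] using M8 C40 key by linarith
qed

end

context tf begin
lemma M8_gen: "card V \<ge> 4 \<Longrightarrow> 8 * real (num_copies graph_M (V,E)) =
   (real (card V) - 4) * (real (card Arc) * (real (card Arc) + 2) - 4 * (\<Sum>a\<in>V. real (deg a)^2))"
proof -
  assume c4: "card V \<ge> 4"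
  have "real_of_int (int (card (TupM (V,E)))) = real_of_int (int (card V - 4) * int (card P2))"
    using card_TupM_V by simp
  hence "real (card (TupM (V,E))) = real (card V - 4) * real_of_int (int (card P2))" by simp
  also have "real_of_int (int (card P2)) = real (card Arc) * (real (card Arc) + 2) - 4 * (\<Sum>a\<in>V. real (deg a)^2)"
    using arg_cong[OF card_P2, of real_of_int] by simp
  finally show ?thesis using numM[symmetric] c4 by (simp add: of_nat_diff)
qed
end

definition ET :: "nat \<Rightarrow> nat set set" where
  "ET n = snd (T2 n)"

lemma T2_edge: "{x,y} \<in> ET n \<longleftrightarrow> x < n \<and> y < n \<and> ((x < n div 2 \<and> n div 2 \<le> y) \<or> (y < n div 2 \<and> n div 2 \<le> x))"
  unfolding ET_def T2_def by (auto simp: doubleton_eq_iff)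

lemma T2_edge_form: "e \<in> ET n \<Longrightarrow> \<exists>x y. e = {x,y} \<and> x < n div 2 \<and> n div 2 \<le> y \<and> y < n"
  unfolding ET_def T2_def by auto

lemma T2_is_graph: "is_graph (T2 n)"
  unfolding is_graph_def
proof
  show "finite (fst (T2 n))" by (simp add: T2_def)
  show "\<forall>e\<in>snd (T2 n). card e = 2 \<and> e \<subseteq> fst (T2 n)"
    using T2_edge_form[of _ n] unfolding ET_def by (fastforce simp: T2_def)
qed

lemma T2_tf: "triangle_free (T2 n)"
  unfolding triangle_free_def
proof
  assume "\<exists>a b c. {a,b} \<in> snd (T2 n) \<and> {b,c} \<in> snd (T2 n) \<and> {a,c} \<in> snd (T2 n) \<and> a \<noteq> b \<and> b \<noteq> c \<and> a \<noteq> c"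
  then obtain a b c where "{a,b} \<in> ET n" "{b,c} \<in> ET n" "{a,c} \<in> ET n" unfolding ET_def by blast
  thus False unfolding T2_edge by auto
qed

lemma T2_tf_loc: "tf {..<n} (ET n)"
proof -
  have "sg {..<n} (ET n)"
    using T2_is_graph[of n] unfolding is_graph_def sg_def ET_def by (simp add: T2_def)
  moreover have "tf_axioms (ET n)"
    using T2_tf[of n] unfolding tf_axioms_def triangle_free_def ET_def by simp
  ultimately show ?thesis by (simp add: tf_def)
qed

lemma T2_fst: "T2 n = ({..<n}, ET n)" unfolding ET_def T2_def by simp

context fixes n :: nat begin
interpretation T: tf "{..<n}" "ET n" by (rule T2_tf_loc)

lemma T2_N: "a < n \<Longrightarrow> T.N a = (if a < n div 2 then {n div 2..<n} else {..<n div 2})"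
  unfolding T.N_def T2_edge by auto

lemma T2_deg: "a < n \<Longrightarrow> T.deg a = (if a < n div 2 then n - n div 2 else n div 2)"
  unfolding T.deg_def using T2_N by simp

lemma T2_split: "(\<Sum>a<n. f a) = (\<Sum>a<n div 2. f a) + (\<Sum>a\<in>{n div 2..<n}. f a)"
proof -
  have 1: "{..<n} = {..<n div 2} \<union> {n div 2..<n}" by auto
  have "sum f ({..<n div 2} \<union> {n div 2..<n}) = sum f {..<n div 2} + sum f {n div 2..<n}"
    by (rule sum.union_disjoint) auto
  thus ?thesis unfolding 1[symmetric] .
qed

lemma T2_Arc: "real (card T.Arc) = 2 * real (n div 2 * (n - n div 2))"
proof -
  have "card T.Arc = (\<Sum>a<n. T.deg a)" by (rule T.card_Arc)
  also have "\<dots> = (\<Sum>a<n div 2. n - n div 2) + (\<Sum>a\<in>{n div 2..<n}. n div 2)"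
    unfolding T2_split by (intro arg_cong2[where f="(+)"] sum.cong) (auto simp: T2_deg)
  finally show ?thesis by simp
qed

lemma T2_S: "(\<Sum>a<n. real (T.deg a)^2) = real n * real (n div 2 * (n - n div 2))"
proof -
  have "(\<Sum>a<n. real (T.deg a)^2) = (\<Sum>a<n div 2. real (n - n div 2)^2) + (\<Sum>a\<in>{n div 2..<n}. real (n div 2)^2)"
    unfolding T2_split by (intro arg_cong2[where f="(+)"] sum.cong) (auto simp: T2_deg)
  also have "\<dots> = real (n div 2) * real (n - n div 2)^2 + real (n - n div 2) * real (n div 2)^2" by simp
  also have "\<dots> = (real (n div 2) + real (n - n div 2)) * real (n div 2 * (n - n div 2))"
    by (simp add: power2_eq_square algebra_simps)
  also have "real (n div 2) + real (n - n div 2) = real n" by simp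
  finally show ?thesis .
qed

lemma T2_quarter: "n div 2 * (n - n div 2) = n * n div 4"
proof (cases "even n")
  case True
  then obtain k where "n = 2*k" by blast
  thus ?thesis by simp
next
  case False
  then obtain k where k: "n = 2*k+1" using oddE by blast
  have "n * n div 4 = k*k + k" unfolding k by (simp add: algebra_simps)
  moreover have "n div 2 = k" unfolding k by simp
  ultimately show ?thesis unfolding k by (simp add: algebra_simps)
qed

lemma T2_M_value:
  "real (num_copies graph_M (T2 n)) \<ge>
   (real n - 4) * (2 * real (n * n div 4) * (2 * real (n * n div 4) + 2)
     - 4 * real n * real (n * n div 4)) / 8"
proof (cases "n \<ge> 4")
  case True
  have "8 * real (num_copies graph_M (T2 n)) =
   (real n - 4) * (real (card T.Arc) * (real (card T.Arc) + 2) - 4 * (\<Sum>a<n. real (T.deg a)^2))"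
    using T.M8_gen True unfolding T2_fst by simp
  hence "8 * real (num_copies graph_M (T2 n)) = (real n - 4) * (2 * real (n * n div 4) * (2 * real (n * n div 4) + 2)
     - 4 * (real n * real (n * n div 4)))"
    unfolding T2_Arc T2_S T2_quarter .
  thus ?thesis by (simp only: mult.assoc)
next
  case False
  hence "n = 0 \<or> n = 1 \<or> n = 2 \<or> n = 3" by linarith
  hence z: "(real n - 4) * (2 * real (n * n div 4) * (2 * real (n * n div 4) + 2)
     - 4 * real n * real (n * n div 4)) = 0" by (elim disjE) simp_all
  show ?thesis unfolding z by simp
qed

lemma T2_TMab: "T.TMa \<union> T.TMb = TupM ({..<n}, ET n)"
proof (intro equalityI T.TMab_sub subsetI)
  fix t assume t: "t \<in> TupM ({..<n}, ET n)"
  then obtain a b c d w where tt: "t = (a,b,c,d,w)" and h: "distinct [a,b,c,d,w]" "{a,b,c,d,w} \<subseteq> {..<n}"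
    "{a,b} \<in> ET n" unfolding TupM_def by auto
  have "{a,w} \<in> ET n \<or> {b,w} \<in> ET n" using h unfolding T2_edge by auto
  thus "t \<in> T.TMa \<union> T.TMb" using t unfolding tt T.TMa_def T.TMb_def by auto
qed

lemma T2_P_eq_M: "num_copies graph_M' (T2 n) = num_copies graph_M (T2 n)"
proof -
  have "card T.TMa + card T.TMb = card (T.TMa \<union> T.TMb)"
    by (rule card_Un_disjoint[symmetric])
       (use finite_subset[OF T.TMab_sub T.finTupM] T.TMab_disj in auto)
  hence "2 * card (TupP ({..<n}, ET n)) = card (TupM ({..<n}, ET n))"
    unfolding T2_TMab using T.card_TMa_TMb T.card_TupP_TMb by simp
  thus ?thesis using T.numM T.numP unfolding T2_fst by simp
qed

end

lemma cand_bound: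
  assumes g: "is_graph G" and v: "fst G = {..<n}" and t: "triangle_free G"
  shows "num_copies graph_M G + num_copies graph_C5 G \<le> num_copies graph_M (T2 n)"
    and "num_copies graph_M' G + num_copies graph_C5 G \<le> num_copies graph_M (T2 n)"
proof -
  obtain V E where G: "G = (V,E)" by (cases G)
  interpret tf V E
    using g t unfolding G tf_def sg_def tf_axioms_def is_graph_def triangle_free_def by auto
  have cV: "card V = n" using v G by simp
  have "real (num_copies graph_M (V,E)) + real (num_copies graph_C5 (V,E))
     \<le> real (num_copies graph_M (T2 n))"
    using bound_main T2_M_value[of n] unfolding cV by linarith
  hence 1: "num_copies graph_M (V,E) + num_copies graph_C5 (V,E) \<le> num_copies graph_M (T2 n)"
    by linarith
  thus "num_copies graph_M G + num_copies graph_C5 G \<le> num_copies graph_M (T2 n)" unfolding G .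
  show "num_copies graph_M' G + num_copies graph_C5 G \<le> num_copies graph_M (T2 n)"
    using 1 numP_le unfolding G by linarith
qed

lemma cand_finite: "finite {G :: nat graph. is_graph G \<and> fst G = {..<n} \<and> triangle_free G}"
proof (rule finite_subset)
  show "{G :: nat graph. is_graph G \<and> fst G = {..<n} \<and> triangle_free G} \<subseteq> {{..<n}} \<times> Pow (Pow {..<n})"
    unfolding is_graph_def by (auto simp: subset_eq)
  show "finite ({{..<n}} \<times> Pow (Pow {..<n}))" by simp
qed

lemma ex_eq:
  fixes H :: "nat graph"
  assumes le: "\<And>G. is_graph G \<Longrightarrow> fst G = {..<n} \<Longrightarrow> triangle_free G \<Longrightarrow>
      num_copies H G + num_copies graph_C5 G \<le> num_copies H (T2 n) + num_copies graph_C5 (T2 n)"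
  shows "ex2_K3 n H graph_C5 = num_copies H (T2 n) + num_copies graph_C5 (T2 n)"
  unfolding ex2_K3_def
proof (rule Max_eqI)
  have "{num_copies H G + num_copies graph_C5 G |G. is_graph G \<and> fst G = {..<n} \<and> triangle_free G}
     = (\<lambda>G. num_copies H G + num_copies graph_C5 G) ` {G. is_graph G \<and> fst G = {..<n} \<and> triangle_free G}"
    by auto
  thus "finite {num_copies H G + num_copies graph_C5 G |G. is_graph G \<and> fst G = {..<n} \<and> triangle_free G}"
    using cand_finite[of n] by simp
  show "\<And>y. y \<in> {num_copies H G + num_copies graph_C5 G |G. is_graph G \<and> fst G = {..<n} \<and> triangle_free G}
     \<Longrightarrow> y \<le> num_copies H (T2 n) + num_copies graph_C5 (T2 n)" using le by auto
  show "num_copies H (T2 n) + num_copies graph_C5 (T2 n)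
     \<in> {num_copies H G + num_copies graph_C5 G |G. is_graph G \<and> fst G = {..<n} \<and> triangle_free G}"
    using T2_is_graph T2_tf by (auto simp: T2_def)
qed

theorem mainTheorem14:
  fixes n :: nat
  shows "ex2_K3 n graph_M graph_C5 = num_copies graph_M (T2 n) + num_copies graph_C5 (T2 n)
       \<and> ex2_K3 n graph_M' graph_C5 = num_copies graph_M' (T2 n) + num_copies graph_C5 (T2 n)"
proof
  show "ex2_K3 n graph_M graph_C5 = num_copies graph_M (T2 n) + num_copies graph_C5 (T2 n)"
    by (rule ex_eq) (use cand_bound(1) in fastforce)
  show "ex2_K3 n graph_M' graph_C5 = num_copies graph_M' (T2 n) + num_copies graph_C5 (T2 n)"
    by (rule ex_eq) (use cand_bound(2) T2_P_eq_M[of n] in fastforce)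
qed

end
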